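(* Let $K$ be a Hermitian locally trace-class kernel on $L^2(\Xi,\mu)$ and let $f\in L^2(\mu)$ be such that the kernels $L_0(x,y)=K(x,y)-\frac12 f(x)\overline{f(y)}$ and $L_1(x,y)=K(x,y)+\frac12 f(x)\overline{f(y)}$ define integral operators $\mathcal L_0,\mathcal L_1$ with $0\le\mathcal L_0\le I$ and $0\le\mathcal L_1\le I$. Let $\Pi_0,\Pi_1$ be determinantal point processes with background measure $\mu$ and kernels $L_0,L_1$ respectively, and let $\xi$ be a Bernoulli$(1/2)$ random variable independent of $(\Pi_0,\Pi_1)$. Define $\Pi=\Pi_0$ if $\xi=0$ and $\Pi=\Pi_1$ if $\xi=1$. Then $\Pi$ is a determinantal point process with kernel $K$ and background measure $\mu$.
   Context: A determinantal point process with Hermitian kernel $K$ and background measure $\mu$ is a point process whose $k$-point correlation functions with respect to $\mu^{\otimes k}$ are $\det(K(x_i,x_j))_{i,j\le k}$ for all $k\ge1$. *)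

theory Defs
  imports "HOL-Probability.Probability" "Jordan_Normal_Form.Determinant"
begin

definition L2 :: "'a measure \<Rightarrow> ('a \<Rightarrow> complex) \<Rightarrow> bool" where
  "L2 M g \<longleftrightarrow> g \<in> borel_measurable M \<and> integrable M (\<lambda>x. (cmod (g x))\<^sup>2)"

definition hermitian_kernel :: "'a measure \<Rightarrow> ('a \<Rightarrow> 'a \<Rightarrow> complex) \<Rightarrow> bool" where
  "hermitian_kernel M K \<longleftrightarrow>
     (\<lambda>(x,y). K x y) \<in> borel_measurable (M \<Otimes>\<^sub>M M) \<and> (\<forall>x y. K y x = cnj (K x y))"

text \<open>Locally trace class: for every bounded Borel set B the operator chi_B K chi_B on
  L2(B) is trace class, i.e. a product of two Hilbert-Schmidt operators, i.e. its kernel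
  is (a.e.) a composition of two square-integrable kernels on B x B.\<close>
definition locally_trace_class :: "'a::metric_space measure \<Rightarrow> ('a \<Rightarrow> 'a \<Rightarrow> complex) \<Rightarrow> bool" where
  "locally_trace_class M K \<longleftrightarrow>
     (\<forall>B \<in> sets M. bounded B \<longrightarrow>
        (\<exists>A C :: 'a \<times> 'a \<Rightarrow> complex.
           L2 (restrict_space M B \<Otimes>\<^sub>M restrict_space M B) A \<and>
           L2 (restrict_space M B \<Otimes>\<^sub>M restrict_space M B) C \<and>
           (AE p in restrict_space M B \<Otimes>\<^sub>M restrict_space M B.
              K (fst p) (snd p) = (\<integral>z. A (fst p, z) * C (z, snd p) \<partial>restrict_space M B))))"

definition kernel_op_between_0_I :: "'a measure \<Rightarrow> ('a \<Rightarrow> 'a \<Rightarrow> complex) \<Rightarrow> bool" where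
  "kernel_op_between_0_I M L \<longleftrightarrow>
     (\<forall>g. L2 M g \<longrightarrow>
        (AE x in M. integrable M (\<lambda>y. L x y * g y)) \<and>
        L2 M (\<lambda>x. \<integral>y. L x y * g y \<partial>M) \<and>
        (let q = (\<integral>x. (\<integral>y. L x y * g y \<partial>M) * cnj (g x) \<partial>M)
         in q \<in> \<real> \<and> 0 \<le> Re q \<and> Re q \<le> (\<integral>x. (cmod (g x))\<^sup>2 \<partial>M)))"

definition config_space :: "'a measure \<Rightarrow> 'a set measure" where
  "config_space M = sigma (Pow (space M))
     (\<Union>A \<in> sets M. \<Union>n::nat. {{S. S \<subseteq> space M \<and> finite (S \<inter> A) \<and> card (S \<inter> A) = n}})"

definition point_process :: "'w measure \<Rightarrow> 'a::metric_space measure \<Rightarrow> ('w \<Rightarrow> 'a set) \<Rightarrow> bool" where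
  "point_process P M X \<longleftrightarrow> prob_space P \<and> X \<in> measurable P (config_space M) \<and>
     (\<forall>\<omega> \<in> space P. \<forall>B \<in> sets M. bounded B \<longrightarrow> finite (X \<omega> \<inter> B))"

definition kernel_matrix :: "nat \<Rightarrow> ('a \<Rightarrow> 'a \<Rightarrow> complex) \<Rightarrow> (nat \<Rightarrow> 'a) \<Rightarrow> complex mat" where
  "kernel_matrix k K x = mat k k (\<lambda>(i,j). K (x i) (x j))"

text \<open>Determinantal point process: for every k \<ge> 1 the k-point correlation function w.r.t.
  the product measure M^k (i.e. the density of the k-th factorial moment measure) is
  det(K(x_i,x_j)); in particular this determinant is a.e. real and nonnegative.\<close>
definition dpp :: "'w measure \<Rightarrow> 'a::metric_space measure \<Rightarrow> ('a \<Rightarrow> 'a \<Rightarrow> complex) \<Rightarrow> ('w \<Rightarrow> 'a set) \<Rightarrow> bool" where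
  "dpp P M K X \<longleftrightarrow> point_process P M X \<and>
     (\<forall>k \<ge> 1.
        (AE x in PiM {..<k} (\<lambda>_. M).
           Determinant.det (kernel_matrix k K x) \<in> \<real> \<and> 0 \<le> Re (Determinant.det (kernel_matrix k K x))) \<and>
        (\<forall>\<phi> \<in> borel_measurable (PiM {..<k} (\<lambda>_. M)).
           (\<integral>\<^sup>+\<omega>. (\<integral>\<^sup>+x. \<phi> x \<partial>count_space {x \<in> {..<k} \<rightarrow>\<^sub>E X \<omega>. inj_on x {..<k}}) \<partial>P)
           = (\<integral>\<^sup>+x. \<phi> x * ennreal (Re (Determinant.det (kernel_matrix k K x))) \<partial>PiM {..<k} (\<lambda>_. M))))"

end

theory Submission
  imports Defs
begin

lemma det_rank1_expand:
  fixes g :: "nat \<Rightarrow> nat \<Rightarrow> complex"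
  shows "Determinant.det (mat n n (\<lambda>(i,j). g i j + s * a i * b j)) =
    (\<Sum>f\<in>{f. (\<forall>i\<in>{0..<n}. f i \<in> {0,1}) \<and> (\<forall>i. i \<notin> {0..<n} \<longrightarrow> f i = i)}.
       s ^ card {i\<in>{0..<n}. f i = 1} * ((\<Prod>i\<in>{i\<in>{0..<n}. f i = 1}. a i) *
        Determinant.det (mat\<^sub>r n n (\<lambda>i. if f i = 1 then vec n b else vec n (g i)))))"
proof -
  let ?r = "\<lambda>i k. if k = (1::nat) then vec n (\<lambda>j. s * a i * b j) else vec n (g i)"
  have eq: "mat n n (\<lambda>(i,j). g i j + s * a i * b j) = mat\<^sub>r n n (\<lambda>i. finsum_vec TYPE(complex) n (?r i) {0,1})"
  proof -
    have fs: "finsum_vec TYPE(complex) n (?r i) {0,1} $ j = g i j + s * a i * b j" if j: "j < n" for i j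
    proof -
      have "finsum_vec TYPE(complex) n (?r i) {0,1} $ j = (\<Sum>k\<in>{0,1}. ?r i k $ j)"
        by (rule index_finsum_vec) (use j in auto)
      then show ?thesis using j by simp
    qed
    show ?thesis
    proof (rule eq_matI)
      fix i j assume "i < dim_row (mat\<^sub>r n n (\<lambda>i. finsum_vec TYPE(complex) n (?r i) {0,1}))"
        "j < dim_col (mat\<^sub>r n n (\<lambda>i. finsum_vec TYPE(complex) n (?r i) {0,1}))"
      then have ij: "i < n" "j < n" by simp_all
      have "finsum_vec TYPE(complex) n (?r i) {0,1} \<in> carrier_vec n"
        by (rule finsum_vec_closed) auto
      then show "mat n n (\<lambda>(i,j). g i j + s * a i * b j) $$ (i, j) = mat\<^sub>r n n (\<lambda>i. finsum_vec TYPE(complex) n (?r i) {0,1}) $$ (i, j)"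
        using fs[OF ij(2), of i] ij by simp
    qed auto
  qed
  have "Determinant.det (mat\<^sub>r n n (\<lambda>i. finsum_vec TYPE(complex) n (?r i) {0,1})) =
     (\<Sum>f\<in>{f. (\<forall>i\<in>{0..<n}. f i \<in> {0,1}) \<and> (\<forall>i. i \<notin> {0..<n} \<longrightarrow> f i = i)}. Determinant.det (mat\<^sub>r n n (\<lambda>i. ?r i (f i))))"
    by (rule det_linear_rows_sum[of "{0,1}" ?r n]) auto
  also have "\<dots> = (\<Sum>f\<in>{f. (\<forall>i\<in>{0..<n}. f i \<in> {0,1}) \<and> (\<forall>i. i \<notin> {0..<n} \<longrightarrow> f i = i)}.
       s ^ card {i\<in>{0..<n}. f i = 1} * ((\<Prod>i\<in>{i\<in>{0..<n}. f i = 1}. a i) *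
        Determinant.det (mat\<^sub>r n n (\<lambda>i. if f i = 1 then vec n b else vec n (g i)))))"
  proof (rule sum.cong[OF refl])
    fix f assume f: "f \<in> {f. (\<forall>i\<in>{0..<n}. f i \<in> {0,1}) \<and> (\<forall>i. i \<notin> {0..<n} \<longrightarrow> f i = i)}"
    let ?c = "\<lambda>i. if f i = 1 then s * a i else 1"
    let ?v = "\<lambda>i. if f i = 1 then vec n b else vec n (g i)"
    have e: "mat\<^sub>r n n (\<lambda>i. ?r i (f i)) = mat\<^sub>r n n (\<lambda>i. ?c i \<cdot>\<^sub>v ?v i)"
      by (rule eq_matI) auto
    have vc: "?v \<in> {0..<n} \<rightarrow> carrier_vec n" by auto
    have "Determinant.det (mat\<^sub>r n n (\<lambda>i. ?r i (f i))) = Determinant.det (mat\<^sub>r n n (\<lambda>i. ?c i \<cdot>\<^sub>v ?v i))"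
      by (simp only: e)
    also have "\<dots> = prod ?c {0..<n} * Determinant.det (mat\<^sub>r n n ?v)"
      by (rule det_rows_mul[OF vc])
    also have "prod ?c {0..<n} = (\<Prod>i\<in>{i\<in>{0..<n}. f i = 1}. s * a i)"
      using prod.inter_filter[of "{0..<n}" "\<lambda>i. s * a i" "\<lambda>i. f i = 1"] by simp
    also have "\<dots> = s ^ card {i\<in>{0..<n}. f i = 1} * (\<Prod>i\<in>{i\<in>{0..<n}. f i = 1}. a i)"
      by (simp add: prod.distrib)
    finally show "Determinant.det (mat\<^sub>r n n (\<lambda>i. ?r i (f i))) = s ^ card {i\<in>{0..<n}. f i = 1} * ((\<Prod>i\<in>{i\<in>{0..<n}. f i = 1}. a i) *
        Determinant.det (mat\<^sub>r n n ?v))" by simp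
  qed
  finally show ?thesis by (simp only: eq)
qed

lemma det_rank1_sym:
  fixes g :: "nat \<Rightarrow> nat \<Rightarrow> complex"
  shows "Determinant.det (mat n n (\<lambda>(i,j). g i j + t * a i * b j)) +
         Determinant.det (mat n n (\<lambda>(i,j). g i j + (-t) * a i * b j)) =
         2 * Determinant.det (mat n n (\<lambda>(i,j). g i j))"
proof -
  have z: "mat n n (\<lambda>(i,j). g i j) = mat n n (\<lambda>(i,j). g i j + 0 * a i * b j)" by simp
  show ?thesis
    unfolding z det_rank1_expand sum.distrib[symmetric] sum_distrib_left
  proof (rule sum.cong[OF refl])
    fix f assume f: "f \<in> {f. (\<forall>i\<in>{0..<n}. f i \<in> {0,1}) \<and> (\<forall>i. i \<notin> {0..<n} \<longrightarrow> f i = i)}"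
    define m where "m = card {i\<in>{0..<n}. f i = 1}"
    define X where "X = (\<Prod>i\<in>{i\<in>{0..<n}. f i = 1}. a i) *
        Determinant.det (mat\<^sub>r n n (\<lambda>i. if f i = 1 then vec n b else vec n (g i)))"
    have "m = 0 \<or> m = 1 \<or> X = 0"
    proof (cases "m \<ge> 2")
      case True
      then obtain i j where ij: "i \<in> {i\<in>{0..<n}. f i = 1}" "j \<in> {i\<in>{0..<n}. f i = 1}" "i \<noteq> j"
      proof -
        have "\<not> card {i\<in>{0..<n}. f i = 1} \<le> Suc 0" using True unfolding m_def by simp
        then show ?thesis using card_le_Suc0_iff_eq[of "{i\<in>{0..<n}. f i = 1}"] that by auto
      qed
      have "Determinant.det (mat\<^sub>r n n (\<lambda>i. if f i = 1 then vec n b else vec n (g i))) = 0"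
        by (rule det_identical_rows[of _ n i j]) (use ij in auto)
      then show ?thesis unfolding X_def by simp
    qed auto
    then show "t ^ m * X + (- t) ^ m * X = 2 * (0 ^ m * X)" by (elim disjE) auto
  qed
qed


definition cnt :: "'a set \<Rightarrow> 'a set \<Rightarrow> ennreal" where
  "cnt A S = (if finite (S \<inter> A) then of_nat (card (S \<inter> A)) else \<infinity>)"

lemma config_space_space: "space (config_space M) = Pow (space M)"
  unfolding config_space_def by (simp add: space_measure_of_conv)

lemma config_gen_in:
  "A \<in> sets M \<Longrightarrow> {S. S \<subseteq> space M \<and> finite (S \<inter> A) \<and> card (S \<inter> A) = n} \<in> sets (config_space M)"
  unfolding config_space_def by (rule in_measure_of) auto

lemma cnt_measurable:
  assumes A: "A \<in> sets M" shows "cnt A \<in> borel_measurable (config_space M)"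
proof -
  define h where "h S = (if finite (S \<inter> A) then Some (card (S\<inter>A)) else None)" for S
  have cU: "countable (UNIV :: nat option set)" by simp
  have h: "h \<in> measurable (config_space M) (count_space UNIV)"
    unfolding measurable_count_space_eq_countable[OF cU]
  proof (intro conjI ballI)
    show "h \<in> space (config_space M) \<rightarrow> UNIV" by simp
    fix a :: "nat option"
    assume "a \<in> UNIV"
    show "h -` {a} \<inter> space (config_space M) \<in> sets (config_space M)"
    proof (cases a)
      case (Some m)
      then have "h -` {a} \<inter> space (config_space M) = {S. S \<subseteq> space M \<and> finite (S \<inter> A) \<and> card (S \<inter> A) = m}"
        by (auto simp: h_def config_space_space split: if_splits)
      then show ?thesis using config_gen_in[OF A] by simp
    next
      case None
      then have "h -` {a} \<inter> space (config_space M) = space (config_space M) - (\<Union>m. {S. S \<subseteq> space M \<and> finite (S \<inter> A) \<and> card (S \<inter> A) = m})"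
        by (auto simp: h_def config_space_space split: if_splits)
      then show ?thesis using config_gen_in[OF A] by auto
    qed
  qed
  define g where "g = (\<lambda>z. case z of None \<Rightarrow> (\<infinity>::ennreal) | Some m \<Rightarrow> of_nat m)"
  have "cnt A = g \<circ> h"
    by (auto simp: cnt_def h_def g_def fun_eq_iff)
  moreover have "g \<in> borel_measurable (count_space UNIV)" by simp
  ultimately show ?thesis using measurable_comp[OF h] by metis
qed

definition LF :: "'a::metric_space set set" where
  "LF = {S. \<forall>n::nat. finite (S \<inter> ball undefined (real n))}"

lemma space_borel_eq: "sets (\<mu>::'a::topological_space measure) = sets borel \<Longrightarrow> space \<mu> = UNIV"
  using sets_eq_imp_space_eq by fastforce

lemma LF_sets:
  fixes \<mu> :: "'a::metric_space measure"
  assumes s\<mu>: "sets \<mu> = sets borel"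
  shows "LF \<in> sets (config_space \<mu>)"
proof -
  have b: "ball undefined (real n) \<in> sets \<mu>" for n using s\<mu> by simp
  have "LF = (\<Inter>n. cnt (ball undefined (real n)) -` {..<\<infinity>} \<inter> space (config_space \<mu>))"
    by (auto simp: LF_def cnt_def config_space_space space_borel_eq[OF s\<mu>] of_nat_less_top split: if_splits)
  also have "\<dots> \<in> sets (config_space \<mu>)"
    using measurable_sets[OF cnt_measurable[OF b], of "{..<\<infinity>}"]
    by (intro sets.countable_INT'[of UNIV]) auto
  finally show ?thesis .
qed

lemma rect_count:
  fixes k :: nat
  assumes "\<And>i. i < k \<Longrightarrow> finite (S \<inter> Y i)"
  shows "(\<integral>\<^sup>+x. indicator (Pi\<^sub>E {..<k} Y) x \<partial>count_space (Pi\<^sub>E {..<k} (\<lambda>_. S))) = (\<Prod>i<k. cnt (Y i) S)"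
proof -
  let ?B = "Pi\<^sub>E {..<k} (\<lambda>_. S)"
  have "(\<integral>\<^sup>+x. indicator (Pi\<^sub>E {..<k} Y) x \<partial>count_space ?B) = (\<integral>\<^sup>+x. indicator (Pi\<^sub>E {..<k} Y \<inter> ?B) x \<partial>count_space ?B)"
    by (rule nn_integral_cong) (auto simp: indicator_def)
  also have "Pi\<^sub>E {..<k} Y \<inter> ?B = Pi\<^sub>E {..<k} (\<lambda>i. S \<inter> Y i)"
    by (auto simp: PiE_Int)
  also have "(\<integral>\<^sup>+x. indicator (Pi\<^sub>E {..<k} (\<lambda>i. S \<inter> Y i)) x \<partial>count_space ?B) = emeasure (count_space ?B) (Pi\<^sub>E {..<k} (\<lambda>i. S \<inter> Y i))"
    by (rule nn_integral_indicator) (auto simp: PiE_def Pi_def)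
  also have "\<dots> = of_nat (card (Pi\<^sub>E {..<k} (\<lambda>i. S \<inter> Y i)))"
  proof (rule emeasure_count_space_finite)
    show "finite (Pi\<^sub>E {..<k} (\<lambda>i. S \<inter> Y i))" using assms by (intro finite_PiE finite_lessThan) auto
  qed (auto simp: PiE_def Pi_def)
  also have "\<dots> = (\<Prod>i<k. cnt (Y i) S)"
    by (simp add: card_PiE cnt_def assms of_nat_prod)
  finally show ?thesis .
qed


definition Bk :: "nat \<Rightarrow> nat \<Rightarrow> (nat \<Rightarrow> 'a::metric_space) set" where
  "Bk k n = {x. \<forall>i<k. x i \<in> ball undefined (real n)}"

lemma mcong: "(\<And>w. w \<in> space M \<Longrightarrow> f w = g w) \<Longrightarrow> g \<in> measurable M N \<Longrightarrow> f \<in> measurable M N"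
  using measurable_cong by blast

lemma LF_fin: "S \<in> LF \<Longrightarrow> finite (S \<inter> ball undefined (real n))" by (simp add: LF_def)

lemma rect_Bk:
  fixes k :: nat
  assumes S: "S \<in> LF"
  shows "(\<integral>\<^sup>+x. indicator (Pi\<^sub>E {..<k} X \<inter> Bk k n) x \<partial>count_space (Pi\<^sub>E {..<k} (\<lambda>_. S)))
       = (\<Prod>i<k. cnt (X i \<inter> ball undefined (real n)) S)"
proof -
  have "(\<integral>\<^sup>+x. indicator (Pi\<^sub>E {..<k} X \<inter> Bk k n) x \<partial>count_space (Pi\<^sub>E {..<k} (\<lambda>_. S)))
     = (\<integral>\<^sup>+x. indicator (Pi\<^sub>E {..<k} (\<lambda>i. X i \<inter> ball undefined (real n))) x \<partial>count_space (Pi\<^sub>E {..<k} (\<lambda>_. S)))"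
    by (rule nn_integral_cong) (auto simp: indicator_def Bk_def PiE_def Pi_def)
  also have "\<dots> = (\<Prod>i<k. cnt (X i \<inter> ball undefined (real n)) S)"
  proof (rule rect_count)
    fix i show "finite (S \<inter> (X i \<inter> ball undefined (real n)))"
      by (rule finite_subset[OF _ LF_fin[OF S, of n]]) auto
  qed
  finally show ?thesis .
qed

lemma count_meas_set_n:
  fixes \<mu> :: "'a::metric_space measure" and k :: nat
  assumes s\<mu>: "sets \<mu> = sets borel" and A: "A \<in> sets (PiM {..<k} (\<lambda>_. \<mu>))"
  shows "(\<lambda>S. \<integral>\<^sup>+x. indicator (A \<inter> Bk k n) x \<partial>count_space (Pi\<^sub>E {..<k} (\<lambda>_. S)))
     \<in> borel_measurable (restrict_space (config_space \<mu>) LF)"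
proof -
  let ?R = "restrict_space (config_space \<mu>) LF"
  let ?Q = "\<lambda>S. Pi\<^sub>E {..<k} (\<lambda>_::nat. S)"
  let ?\<Omega> = "Pi\<^sub>E {..<k} (\<lambda>_::nat. space \<mu>)"
  have Q\<Omega>: "?Q S \<subseteq> ?\<Omega>" for S by (rule PiE_mono) (simp add: space_borel_eq[OF s\<mu>])
  have spR: "space ?R = LF" by (simp add: space_restrict_space config_space_space space_borel_eq[OF s\<mu>])
  have rect: "(\<lambda>S. \<integral>\<^sup>+x. indicator (Pi\<^sub>E {..<k} X \<inter> Bk k n) x \<partial>count_space (?Q S)) \<in> borel_measurable ?R"
    if X: "X \<in> {..<k} \<rightarrow> sets \<mu>" for X
  proof -
    have "X i \<inter> ball undefined (real n) \<in> sets \<mu>" if "i < k" for i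
      using X that s\<mu> by auto
    then have "(\<lambda>S. \<Prod>i<k. cnt (X i \<inter> ball undefined (real n)) S) \<in> borel_measurable (config_space \<mu>)"
      by (intro borel_measurable_prod_ennreal cnt_measurable) auto
    then have m: "(\<lambda>S. \<Prod>i<k. cnt (X i \<inter> ball undefined (real n)) S) \<in> borel_measurable ?R"
      by (rule measurable_restrict_space1)
    have eq: "\<And>S. S \<in> space ?R \<Longrightarrow> (\<integral>\<^sup>+x. indicator (Pi\<^sub>E {..<k} X \<inter> Bk k n) x \<partial>count_space (?Q S))
         = (\<Prod>i<k. cnt (X i \<inter> ball undefined (real n)) S)"
      using rect_Bk spR by auto
    show ?thesis by (rule mcong[OF eq m])
  qed
  have finB: "(\<integral>\<^sup>+x. indicator (?\<Omega> \<inter> Bk k n) x \<partial>count_space (?Q S)) < \<infinity>" if S: "S \<in> LF" for S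
  proof -
    have "(\<integral>\<^sup>+x. indicator (?\<Omega> \<inter> Bk k n) x \<partial>count_space (?Q S)) = (\<Prod>i<k. cnt (space \<mu> \<inter> ball undefined (real n)) S)"
      by (rule rect_Bk[OF S])
    also have "\<dots> = (\<Prod>i<k. of_nat (card (S \<inter> (space \<mu> \<inter> ball undefined (real n)))))"
      using LF_fin[OF S, of n] by (simp add: cnt_def space_borel_eq[OF s\<mu>])
    also have "\<dots> < \<infinity>"
      using of_nat_less_top[of "card (S \<inter> (space \<mu> \<inter> ball undefined (real n))) ^ k"] by simp
    finally show ?thesis .
  qed
  from A have "A \<in> sigma_sets ?\<Omega> (prod_algebra {..<k} (\<lambda>_. \<mu>))" by (simp add: sets_PiM)
  then show ?thesis
  proof (induction rule: sigma_sets_induct_disjoint[OF Int_stable_prod_algebra prod_algebra_sets_into_space, consumes 1, case_names basic empty compl union])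
    case (basic A)
    then obtain E where E: "A = Pi\<^sub>E {..<k} E" "E \<in> {..<k} \<rightarrow> sets \<mu>"
      by (auto elim: prod_algebraE_all)
    show ?case unfolding E(1) by (rule rect[OF E(2)])
  next
    case empty show ?case by simp
  next
    case (compl A)
    have eq: "(\<integral>\<^sup>+x. indicator ((?\<Omega> - A) \<inter> Bk k n) x \<partial>count_space (?Q S))
      = (\<integral>\<^sup>+x. indicator (?\<Omega> \<inter> Bk k n) x \<partial>count_space (?Q S)) - (\<integral>\<^sup>+x. indicator (A \<inter> Bk k n) x \<partial>count_space (?Q S))"
      if S: "S \<in> space ?R" for S
    proof -
      have "(\<integral>\<^sup>+x. indicator ((?\<Omega> - A) \<inter> Bk k n) x \<partial>count_space (?Q S))
          = (\<integral>\<^sup>+x. indicator (?\<Omega> \<inter> Bk k n) x - indicator (A \<inter> Bk k n) x \<partial>count_space (?Q S))"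
      proof (rule nn_integral_cong)
        fix x assume "x \<in> space (count_space (?Q S))"
        then have "x \<in> ?\<Omega>" using Q\<Omega> by auto
        then show "indicator ((?\<Omega> - A) \<inter> Bk k n) x = (indicator (?\<Omega> \<inter> Bk k n) x - indicator (A \<inter> Bk k n) x :: ennreal)"
          by (cases "x \<in> A"; cases "x \<in> Bk k n") (simp_all add: indicator_def)
      qed
      also have "\<dots> = (\<integral>\<^sup>+x. indicator (?\<Omega> \<inter> Bk k n) x \<partial>count_space (?Q S)) - (\<integral>\<^sup>+x. indicator (A \<inter> Bk k n) x \<partial>count_space (?Q S))"
      proof (rule nn_integral_diff)
        have "(\<integral>\<^sup>+x. indicator (A \<inter> Bk k n) x \<partial>count_space (?Q S)) \<le> (\<integral>\<^sup>+x. indicator (?\<Omega> \<inter> Bk k n) x \<partial>count_space (?Q S))"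
        proof (rule nn_integral_mono)
          fix x assume "x \<in> space (count_space (?Q S))"
          then have "x \<in> ?\<Omega>" using Q\<Omega> by auto
          then show "indicator (A \<inter> Bk k n) x \<le> (indicator (?\<Omega> \<inter> Bk k n) x :: ennreal)"
            by (cases "x \<in> A"; cases "x \<in> Bk k n") (simp_all add: indicator_def)
        qed
        also have "\<dots> < \<infinity>" using finB S spR by auto
        finally show "(\<integral>\<^sup>+x. indicator (A \<inter> Bk k n) x \<partial>count_space (?Q S)) \<noteq> \<infinity>" by simp
        show "AE x in count_space (?Q S). indicator (A \<inter> Bk k n) x \<le> (indicator (?\<Omega> \<inter> Bk k n) x :: ennreal)"
        proof (rule AE_I2)
          fix x assume "x \<in> space (count_space (?Q S))"
          then have "x \<in> ?\<Omega>" using Q\<Omega> by auto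
          then show "indicator (A \<inter> Bk k n) x \<le> (indicator (?\<Omega> \<inter> Bk k n) x :: ennreal)"
            by (cases "x \<in> A"; cases "x \<in> Bk k n") (simp_all add: indicator_def)
        qed
      qed auto
      finally show ?thesis .
    qed
    have m: "(\<lambda>S. (\<integral>\<^sup>+x. indicator (?\<Omega> \<inter> Bk k n) x \<partial>count_space (?Q S)) - (\<integral>\<^sup>+x. indicator (A \<inter> Bk k n) x \<partial>count_space (?Q S)))
        \<in> borel_measurable ?R"
      using rect[of "\<lambda>_. space \<mu>"] compl.IH by (intro borel_measurable_minus_ennreal) auto
    show ?case by (rule mcong[OF eq m])
  next
    case (union A)
    have d: "disjoint_family (\<lambda>i. A i \<inter> Bk k n)"
      using union.hyps(1) by (auto simp: disjoint_family_on_def)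
    have eq: "(\<integral>\<^sup>+x. indicator ((\<Union>i. A i) \<inter> Bk k n) x \<partial>count_space (?Q S))
      = (\<Sum>i. \<integral>\<^sup>+x. indicator (A i \<inter> Bk k n) x \<partial>count_space (?Q S))" for S
    proof -
      have "(\<integral>\<^sup>+x. indicator ((\<Union>i. A i) \<inter> Bk k n) x \<partial>count_space (?Q S))
          = (\<integral>\<^sup>+x. (\<Sum>i. indicator (A i \<inter> Bk k n) x) \<partial>count_space (?Q S))"
      proof (rule nn_integral_cong)
        fix x
        have "(\<Union>i. A i \<inter> Bk k n) = (\<Union>i. A i) \<inter> Bk k n" by auto
        then show "indicator ((\<Union>i. A i) \<inter> Bk k n) x = (\<Sum>i. indicator (A i \<inter> Bk k n) x :: ennreal)"
          using suminf_indicator[OF d, of x] by simp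
      qed
      also have "\<dots> = (\<Sum>i. \<integral>\<^sup>+x. indicator (A i \<inter> Bk k n) x \<partial>count_space (?Q S))"
        by (rule nn_integral_suminf) simp
      finally show ?thesis .
    qed
    show ?case unfolding eq using union.IH by (intro borel_measurable_suminf_order) auto
  qed
qed


lemma Bk_ex: fixes x :: "nat \<Rightarrow> 'a::metric_space" shows "\<exists>N. x \<in> Bk k N"
proof -
  define s where "s = (\<Sum>i<k. dist undefined (x i))"
  define N where "N = nat \<lceil>s\<rceil> + 1"
  have "x i \<in> ball undefined (real N)" if "i < k" for i
  proof -
    have "dist undefined (x i) \<le> s"
      unfolding s_def by (rule member_le_sum) (use that in auto)
    also have "\<dots> < real N" using real_nat_ceiling_ge[of s] by (simp add: N_def)
    finally show ?thesis by (simp add: mem_ball)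
  qed
  then show ?thesis unfolding Bk_def by blast
qed

lemma Bk_mono: "m \<le> n \<Longrightarrow> Bk k m \<subseteq> Bk k n"
  unfolding Bk_def mem_ball
proof safe
  fix x i assume "m \<le> n" "\<forall>i<k. dist undefined (x i) < real m" "i < k"
  then show "dist undefined (x i) < real n"
    by (meson less_le_trans of_nat_le_iff)
qed

lemma count_meas_set:
  fixes \<mu> :: "'a::metric_space measure" and k :: nat
  assumes s\<mu>: "sets \<mu> = sets borel" and A: "A \<in> sets (PiM {..<k} (\<lambda>_. \<mu>))"
  shows "(\<lambda>S. \<integral>\<^sup>+x. indicator A x \<partial>count_space (Pi\<^sub>E {..<k} (\<lambda>_. S)))
     \<in> borel_measurable (restrict_space (config_space \<mu>) LF)"
proof -
  have inc: "incseq (\<lambda>n x. indicator (A \<inter> Bk k n) x :: ennreal)"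
  proof (rule incseq_SucI)
    fix n show "(\<lambda>x. indicator (A \<inter> Bk k n) x :: ennreal) \<le> (\<lambda>x. indicator (A \<inter> Bk k (Suc n)) x)"
      using Bk_mono[of n "Suc n" k] unfolding le_fun_def
      by (auto split: split_indicator)
  qed
  have sup: "indicator A x = (SUP n. indicator (A \<inter> Bk k n) x :: ennreal)" for x
  proof -
    obtain N where N: "x \<in> Bk k N" using Bk_ex by blast
    show ?thesis
    proof (rule antisym)
      show "indicator A x \<le> (SUP n. indicator (A \<inter> Bk k n) x :: ennreal)"
        using N by (intro SUP_upper2[of N]) (auto simp: indicator_def)
      show "(SUP n. indicator (A \<inter> Bk k n) x :: ennreal) \<le> indicator A x"
        by (rule SUP_least) (auto simp: indicator_def)
    qed
  qed
  have eq: "(\<integral>\<^sup>+x. indicator A x \<partial>count_space (Pi\<^sub>E {..<k} (\<lambda>_. S)))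
     = (SUP n. \<integral>\<^sup>+x. indicator (A \<inter> Bk k n) x \<partial>count_space (Pi\<^sub>E {..<k} (\<lambda>_. S)))" for S
    unfolding sup by (rule nn_integral_monotone_convergence_SUP[OF inc]) simp
  show ?thesis unfolding eq using count_meas_set_n[OF s\<mu> A] by (intro borel_measurable_SUP) auto
qed

lemma count_meas:
  fixes \<mu> :: "'a::metric_space measure" and k :: nat
  assumes s\<mu>: "sets \<mu> = sets borel" and \<psi>: "\<psi> \<in> borel_measurable (PiM {..<k} (\<lambda>_. \<mu>))"
  shows "(\<lambda>S. \<integral>\<^sup>+x. \<psi> x \<partial>count_space (Pi\<^sub>E {..<k} (\<lambda>_. S)))
     \<in> borel_measurable (restrict_space (config_space \<mu>) LF)"
  using \<psi>
proof (induction rule: borel_measurable_induct)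
  case (cong f g)
  have "(\<lambda>S. \<integral>\<^sup>+x. f x \<partial>count_space (Pi\<^sub>E {..<k} (\<lambda>_. S))) = (\<lambda>S. \<integral>\<^sup>+x. g x \<partial>count_space (Pi\<^sub>E {..<k} (\<lambda>_. S)))"
  proof (rule ext, rule nn_integral_cong)
    fix S :: "'a set" and x assume "x \<in> space (count_space (Pi\<^sub>E {..<k} (\<lambda>_. S)))"
    then have "x \<in> space (PiM {..<k} (\<lambda>_. \<mu>))"
      by (auto simp: space_PiM space_borel_eq[OF s\<mu>] PiE_def Pi_def)
    then show "f x = g x" using cong by auto
  qed
  then show ?case using cong by simp
next
  case (set A) then show ?case by (rule count_meas_set[OF s\<mu>])
next
  case (mult u c)
  have "(\<lambda>S. \<integral>\<^sup>+x. c * u x \<partial>count_space (Pi\<^sub>E {..<k} (\<lambda>_. S))) = (\<lambda>S. c * \<integral>\<^sup>+x. u x \<partial>count_space (Pi\<^sub>E {..<k} (\<lambda>_. S)))"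
    by (rule ext, rule nn_integral_cmult) simp
  then show ?case using mult by (simp add: borel_measurable_times_ennreal)
next
  case (add u v)
  have "(\<lambda>S. \<integral>\<^sup>+x. v x + u x \<partial>count_space (Pi\<^sub>E {..<k} (\<lambda>_. S))) = (\<lambda>S. (\<integral>\<^sup>+x. v x \<partial>count_space (Pi\<^sub>E {..<k} (\<lambda>_. S))) + (\<integral>\<^sup>+x. u x \<partial>count_space (Pi\<^sub>E {..<k} (\<lambda>_. S))))"
    by (rule ext, rule nn_integral_add) simp_all
  then show ?case using add by (simp add: borel_measurable_add)
next
  case (seq U)
  have "(\<lambda>S. \<integral>\<^sup>+x. (SUP i. U i) x \<partial>count_space (Pi\<^sub>E {..<k} (\<lambda>_. S))) = (\<lambda>S. SUP i. \<integral>\<^sup>+x. U i x \<partial>count_space (Pi\<^sub>E {..<k} (\<lambda>_. S)))"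
    unfolding SUP_apply by (rule ext, rule nn_integral_monotone_convergence_SUP) (use seq in auto)
  then show ?case using seq by (simp add: borel_measurable_SUP)
qed

lemma inj_set_meas:
  fixes \<mu> :: "'a::polish_space measure" and k :: nat
  assumes s\<mu>: "sets \<mu> = sets borel"
  shows "{x \<in> space (PiM {..<k} (\<lambda>_. \<mu>)). inj_on x {..<k}} \<in> sets (PiM {..<k} (\<lambda>_. \<mu>))"
proof -
  let ?P = "PiM {..<k} (\<lambda>_. \<mu>)"
  have comp: "(\<lambda>x. x i) \<in> borel_measurable ?P" if "i < k" for i
    using measurable_component_singleton[of i "{..<k}" "\<lambda>_. \<mu>"] that
      measurable_cong_sets[OF refl s\<mu>, of ?P] by simp
  have D: "(\<lambda>x. dist (x i) (x j)) -` {0} \<inter> space ?P \<in> sets ?P" if "i < k" "j < k" for i j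
    by (rule measurable_sets[OF borel_measurable_dist[OF comp comp]]) (use that in auto)
  have "{x \<in> space ?P. inj_on x {..<k}} = space ?P - (\<Union>i\<in>{..<k}. \<Union>j\<in>{..<k}-{i}. (\<lambda>x. dist (x i) (x j)) -` {0} \<inter> space ?P)"
    unfolding inj_on_def by (auto; blast)
  also have "\<dots> \<in> sets ?P"
    by (intro sets.Diff sets.top sets.finite_UN finite_lessThan finite_Diff D) auto
  finally show ?thesis .
qed

lemma F_meas:
  fixes \<mu> :: "'a::polish_space measure" and k :: nat
  assumes s\<mu>: "sets \<mu> = sets borel" and \<phi>: "\<phi> \<in> borel_measurable (PiM {..<k} (\<lambda>_. \<mu>))"
  shows "(\<lambda>S. \<integral>\<^sup>+x. \<phi> x \<partial>count_space {x \<in> {..<k} \<rightarrow>\<^sub>E S. inj_on x {..<k}})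
     \<in> borel_measurable (restrict_space (config_space \<mu>) LF)"
proof -
  let ?I = "{x \<in> space (PiM {..<k} (\<lambda>_. \<mu>)). inj_on x {..<k}}"
  have \<psi>: "(\<lambda>x. \<phi> x * indicator ?I x) \<in> borel_measurable (PiM {..<k} (\<lambda>_. \<mu>))"
    using inj_set_meas[OF s\<mu>, of k] \<phi> by (intro borel_measurable_times_ennreal borel_measurable_indicator) auto
  have "(\<integral>\<^sup>+x. \<phi> x \<partial>count_space {x \<in> {..<k} \<rightarrow>\<^sub>E S. inj_on x {..<k}}) = (\<integral>\<^sup>+x. \<phi> x * indicator ?I x \<partial>count_space ({..<k} \<rightarrow>\<^sub>E S))" for S
  proof -
    have "(\<integral>\<^sup>+x. \<phi> x \<partial>count_space {x \<in> {..<k} \<rightarrow>\<^sub>E S. inj_on x {..<k}})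
        = (\<integral>\<^sup>+x. \<phi> x * indicator {x \<in> {..<k} \<rightarrow>\<^sub>E S. inj_on x {..<k}} x \<partial>count_space UNIV)"
      by (rule nn_integral_count_space_indicator) (simp add: NO_MATCH_def)
    also have "\<dots> = (\<integral>\<^sup>+x. (\<phi> x * indicator ?I x) * indicator ({..<k} \<rightarrow>\<^sub>E S) x \<partial>count_space UNIV)"
    proof (rule nn_integral_cong)
      fix x
      have "x \<in> {..<k} \<rightarrow>\<^sub>E S \<Longrightarrow> x \<in> space (PiM {..<k} (\<lambda>_. \<mu>))"
        by (auto simp: space_PiM space_borel_eq[OF s\<mu>] PiE_def Pi_def)
      then show "\<phi> x * indicator {x \<in> {..<k} \<rightarrow>\<^sub>E S. inj_on x {..<k}} x = (\<phi> x * indicator ?I x) * indicator ({..<k} \<rightarrow>\<^sub>E S) x"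
        by (cases "x \<in> {..<k} \<rightarrow>\<^sub>E S") (simp_all add: indicator_def)
    qed
    also have "\<dots> = (\<integral>\<^sup>+x. \<phi> x * indicator ?I x \<partial>count_space ({..<k} \<rightarrow>\<^sub>E S))"
      by (rule nn_integral_count_space_indicator[symmetric]) (simp add: NO_MATCH_def)
    finally show ?thesis .
  qed
  then show ?thesis using count_meas[OF s\<mu> \<psi>] by simp
qed


lemma det_kernel:
  "Determinant.det (kernel_matrix k (\<lambda>x y. K x y - 1/2 * f x * cnj (f y)) x)
   + Determinant.det (kernel_matrix k (\<lambda>x y. K x y + 1/2 * f x * cnj (f y)) x)
   = 2 * Determinant.det (kernel_matrix k K x)"
proof -
  have e1: "kernel_matrix k (\<lambda>x y. K x y + 1/2 * f x * cnj (f y)) x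
      = mat k k (\<lambda>(i,j). K (x i) (x j) + (1/2) * f (x i) * cnj (f (x j)))"
    by (simp add: kernel_matrix_def)
  have e0: "kernel_matrix k (\<lambda>x y. K x y - 1/2 * f x * cnj (f y)) x
      = mat k k (\<lambda>(i,j). K (x i) (x j) + (-(1/2)) * f (x i) * cnj (f (x j)))"
    by (simp add: kernel_matrix_def)
  have e: "kernel_matrix k K x = mat k k (\<lambda>(i,j). K (x i) (x j))"
    by (simp add: kernel_matrix_def)
  show ?thesis unfolding e0 e1 e
    using det_rank1_sym[of k "\<lambda>i j. K (x i) (x j)" "1/2" "\<lambda>i. f (x i)" "\<lambda>j. cnj (f (x j))"]
    by (simp add: add.commute)
qed

lemma det_kernel_meas:
  fixes \<mu> :: "'a measure"
  assumes L: "(\<lambda>p. L (fst p) (snd p)) \<in> borel_measurable (\<mu> \<Otimes>\<^sub>M \<mu>)"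
  shows "(\<lambda>x. Determinant.det (kernel_matrix k L x)) \<in> borel_measurable (PiM {..<k} (\<lambda>_. \<mu>))"
proof -
  have ent: "(\<lambda>x. L (x i) (x j)) \<in> borel_measurable (PiM {..<k} (\<lambda>_. \<mu>))" if "i < k" "j < k" for i j
  proof -
    have "(\<lambda>x. (x i, x j)) \<in> measurable (PiM {..<k} (\<lambda>_. \<mu>)) (\<mu> \<Otimes>\<^sub>M \<mu>)"
      using that by (intro measurable_Pair measurable_component_singleton) auto
    from measurable_comp[OF this L] show ?thesis by (simp add: comp_def)
  qed
  have eq: "Determinant.det (kernel_matrix k L x) =
     (\<Sum>p\<in>{p. p permutes {0..<k}}. signof p * (\<Prod>i=0..<k. L (x i) (x (p i))))" for x
  proof -
    have "Determinant.det (kernel_matrix k L x) = (\<Sum>p\<in>{p. p permutes {0..<k}}.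
         signof p * (\<Prod>i=0..<k. kernel_matrix k L x $$ (i, p i)))"
      by (rule det_def') (simp add: kernel_matrix_def)
    also have "\<dots> = (\<Sum>p\<in>{p. p permutes {0..<k}}. signof p * (\<Prod>i=0..<k. L (x i) (x (p i))))"
    proof (rule sum.cong[OF refl])
      fix p assume p: "p \<in> {p. p permutes {0..<k}}"
      have "(\<Prod>i=0..<k. kernel_matrix k L x $$ (i, p i)) = (\<Prod>i=0..<k. L (x i) (x (p i)))"
      proof (rule prod.cong[OF refl])
        fix i assume i: "i \<in> {0..<k}"
        then have "p i < k" using p permutes_in_image[of p "{0..<k}" i] by auto
        then show "kernel_matrix k L x $$ (i, p i) = L (x i) (x (p i))"
          using i by (simp add: kernel_matrix_def)
      qed
      then show "signof p * (\<Prod>i=0..<k. kernel_matrix k L x $$ (i, p i)) = signof p * (\<Prod>i=0..<k. L (x i) (x (p i)))"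
        by simp
    qed
    finally show ?thesis .
  qed
  have "(\<lambda>x. \<Sum>p\<in>{p. p permutes {0..<k}}. signof p * (\<Prod>i=0..<k. L (x i) (x (p i))))
      \<in> borel_measurable (PiM {..<k} (\<lambda>_. \<mu>))"
  proof (intro borel_measurable_sum borel_measurable_times borel_measurable_const borel_measurable_prod)
    fix p i assume p: "p \<in> {p. p permutes {0..<k}}" and i: "i \<in> {0..<k}"
    then have "p i < k" using permutes_in_image[of p "{0..<k}" i] by auto
    then show "(\<lambda>x. L (x i) (x (p i))) \<in> borel_measurable (PiM {..<k} (\<lambda>_. \<mu>))"
      using i by (intro ent) auto
  qed
  then show ?thesis unfolding eq .
qed

lemma Int_stable_vimage:
  "Int_stable {f -` S \<inter> \<Omega> | S. S \<in> sets N}"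
  unfolding Int_stable_def
proof (intro ballI)
  fix a b assume "a \<in> {f -` S \<inter> \<Omega> | S. S \<in> sets N}" "b \<in> {f -` S \<inter> \<Omega> | S. S \<in> sets N}"
  then obtain A B where "a = f -` A \<inter> \<Omega>" "A \<in> sets N" "b = f -` B \<inter> \<Omega>" "B \<in> sets N" by auto
  then show "a \<inter> b \<in> {f -` S \<inter> \<Omega> | S. S \<in> sets N}"
    by (intro CollectI exI[of _ "A \<inter> B"]) auto
qed


theorem mainTheorem5:
  fixes \<mu> :: "'a::polish_space measure"
    and K :: "'a \<Rightarrow> 'a \<Rightarrow> complex"
    and f :: "'a \<Rightarrow> complex"
    and P :: "'w measure"
    and \<Pi>0 \<Pi>1 :: "'w \<Rightarrow> 'a set"
    and \<xi> :: "'w \<Rightarrow> bool"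
  assumes sets_\<mu>: "sets \<mu> = sets borel"
    and sf: "sigma_finite_measure \<mu>"
    and loc_fin: "\<forall>B \<in> sets borel. bounded B \<longrightarrow> emeasure \<mu> B < \<infinity>"
    and herm: "hermitian_kernel \<mu> K"
    and ltc: "locally_trace_class \<mu> K"
    and f_L2: "L2 \<mu> f"
    and L0: "kernel_op_between_0_I \<mu> (\<lambda>x y. K x y - 1/2 * f x * cnj (f y))"
    and L1: "kernel_op_between_0_I \<mu> (\<lambda>x y. K x y + 1/2 * f x * cnj (f y))"
    and P: "prob_space P"
    and dpp0: "dpp P \<mu> (\<lambda>x y. K x y - 1/2 * f x * cnj (f y)) \<Pi>0"
    and dpp1: "dpp P \<mu> (\<lambda>x y. K x y + 1/2 * f x * cnj (f y)) \<Pi>1"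
    and \<xi>_meas: "\<xi> \<in> measurable P (count_space UNIV)"
    and \<xi>_bern: "distr P (count_space UNIV) \<xi> = measure_pmf (bernoulli_pmf (1/2))"
    and \<Pi>01_meas: "(\<lambda>\<omega>. (\<Pi>0 \<omega>, \<Pi>1 \<omega>)) \<in> measurable P (config_space \<mu> \<Otimes>\<^sub>M config_space \<mu>)"
    and indep: "prob_space.indep_set P
                  {\<xi> -` S \<inter> space P | S. S \<in> sets (count_space UNIV)}
                  {(\<lambda>\<omega>. (\<Pi>0 \<omega>, \<Pi>1 \<omega>)) -` S \<inter> space P | S. S \<in> sets (config_space \<mu> \<Otimes>\<^sub>M config_space \<mu>)}"
  shows "dpp P \<mu> K (\<lambda>\<omega>. if \<xi> \<omega> then \<Pi>1 \<omega> else \<Pi>0 \<omega>)"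
proof -
  interpret P: prob_space P by (rule P)
  let ?C = "config_space \<mu>"
  let ?Y = "\<lambda>\<omega>. (\<Pi>0 \<omega>, \<Pi>1 \<omega>)"
  have pp0: "point_process P \<mu> \<Pi>0" using dpp0 by (simp add: dpp_def)
  have pp1: "point_process P \<mu> \<Pi>1" using dpp1 by (simp add: dpp_def)
  have m0: "\<Pi>0 \<in> measurable P ?C" using pp0 by (simp add: point_process_def)
  have m1: "\<Pi>1 \<in> measurable P ?C" using pp1 by (simp add: point_process_def)
  have ballB: "ball undefined (real n) \<in> sets \<mu> \<and> bounded (ball (undefined::'a) (real n))" for n
    using sets_\<mu> by simp
  have lf0: "\<Pi>0 \<omega> \<in> LF" if "\<omega> \<in> space P" for \<omega>
    using pp0 that ballB unfolding point_process_def LF_def by blast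
  have lf1: "\<Pi>1 \<omega> \<in> LF" if "\<omega> \<in> space P" for \<omega>
    using pp1 that ballB unfolding point_process_def LF_def by blast
  have \<xi>set: "{\<omega> \<in> space P. \<xi> \<omega>} \<in> sets P"
  proof -
    have "\<xi> -` {True} \<inter> space P \<in> sets P" by (rule measurable_sets[OF \<xi>_meas]) simp
    moreover have "\<xi> -` {True} \<inter> space P = {\<omega> \<in> space P. \<xi> \<omega>}" by auto
    ultimately show ?thesis by simp
  qed
  have pp: "point_process P \<mu> (\<lambda>\<omega>. if \<xi> \<omega> then \<Pi>1 \<omega> else \<Pi>0 \<omega>)"
    unfolding point_process_def
  proof (intro conjI ballI impI)
    show "prob_space P" by (rule P)
    show "(\<lambda>\<omega>. if \<xi> \<omega> then \<Pi>1 \<omega> else \<Pi>0 \<omega>) \<in> measurable P ?C"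
      by (rule measurable_If[OF m1 m0 \<xi>set])
    fix \<omega> B assume "\<omega> \<in> space P" "B \<in> sets \<mu>" "bounded B"
    then show "finite ((if \<xi> \<omega> then \<Pi>1 \<omega> else \<Pi>0 \<omega>) \<inter> B)"
      using pp0 pp1 unfolding point_process_def by auto
  qed
  have distrs: "distr P (count_space UNIV) \<xi> \<Otimes>\<^sub>M distr P (?C \<Otimes>\<^sub>M ?C) ?Y
      = distr P (count_space UNIV \<Otimes>\<^sub>M (?C \<Otimes>\<^sub>M ?C)) (\<lambda>\<omega>. (\<xi> \<omega>, ?Y \<omega>))"
  proof (rule pair_measure_eqI)
    show "sigma_finite_measure (distr P (count_space UNIV) \<xi>)"
      using P.prob_space_distr[OF \<xi>_meas] by (rule prob_space_imp_sigma_finite)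
    show "sigma_finite_measure (distr P (?C \<Otimes>\<^sub>M ?C) ?Y)"
      using P.prob_space_distr[OF \<Pi>01_meas] by (rule prob_space_imp_sigma_finite)
    show "sets (distr P (count_space UNIV) \<xi> \<Otimes>\<^sub>M distr P (?C \<Otimes>\<^sub>M ?C) ?Y)
        = sets (distr P (count_space UNIV \<Otimes>\<^sub>M (?C \<Otimes>\<^sub>M ?C)) (\<lambda>\<omega>. (\<xi> \<omega>, ?Y \<omega>)))"
      by (simp add: sets_pair_measure_cong[OF sets_distr sets_distr])
    fix A B assume A: "A \<in> sets (distr P (count_space UNIV) \<xi>)" and B: "B \<in> sets (distr P (?C \<Otimes>\<^sub>M ?C) ?Y)"
    have Ac: "A \<in> sets (count_space UNIV)" using A by simp
    have Bc: "B \<in> sets (?C \<Otimes>\<^sub>M ?C)" using B by simp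
    have pm: "(\<lambda>\<omega>. (\<xi> \<omega>, ?Y \<omega>)) \<in> measurable P (count_space UNIV \<Otimes>\<^sub>M (?C \<Otimes>\<^sub>M ?C))"
      by (rule measurable_Pair[OF \<xi>_meas \<Pi>01_meas])
    have a: "\<xi> -` A \<inter> space P \<in> {\<xi> -` S \<inter> space P | S. S \<in> sets (count_space UNIV)}" using Ac by blast
    have b: "?Y -` B \<inter> space P \<in> {?Y -` S \<inter> space P | S. S \<in> sets (?C \<Otimes>\<^sub>M ?C)}" using Bc by blast
    have "emeasure (distr P (count_space UNIV \<Otimes>\<^sub>M (?C \<Otimes>\<^sub>M ?C)) (\<lambda>\<omega>. (\<xi> \<omega>, ?Y \<omega>))) (A \<times> B)
        = emeasure P ((\<lambda>\<omega>. (\<xi> \<omega>, ?Y \<omega>)) -` (A \<times> B) \<inter> space P)"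
      by (rule emeasure_distr[OF pm]) (use Ac Bc in \<open>auto intro: pair_measureI\<close>)
    also have "(\<lambda>\<omega>. (\<xi> \<omega>, ?Y \<omega>)) -` (A \<times> B) \<inter> space P = (\<xi> -` A \<inter> space P) \<inter> (?Y -` B \<inter> space P)"
      by auto
    also have "emeasure P ((\<xi> -` A \<inter> space P) \<inter> (?Y -` B \<inter> space P))
        = ennreal (P.prob (\<xi> -` A \<inter> space P) * P.prob (?Y -` B \<inter> space P))"
      using P.indep_setD[OF indep a b] by (simp add: P.emeasure_eq_measure)
    also have "\<dots> = emeasure (distr P (count_space UNIV) \<xi>) A * emeasure (distr P (?C \<Otimes>\<^sub>M ?C) ?Y) B"
      using Ac Bc by (simp add: emeasure_distr \<xi>_meas \<Pi>01_meas P.emeasure_eq_measure ennreal_mult)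
    finally show "emeasure (distr P (count_space UNIV) \<xi>) A * emeasure (distr P (?C \<Otimes>\<^sub>M ?C) ?Y) B
        = emeasure (distr P (count_space UNIV \<Otimes>\<^sub>M (?C \<Otimes>\<^sub>M ?C)) (\<lambda>\<omega>. (\<xi> \<omega>, ?Y \<omega>))) (A \<times> B)" by simp
  qed
  have main: "(AE x in PiM {..<k} (\<lambda>_. \<mu>).
           Determinant.det (kernel_matrix k K x) \<in> \<real> \<and> 0 \<le> Re (Determinant.det (kernel_matrix k K x))) \<and>
        (\<forall>\<phi> \<in> borel_measurable (PiM {..<k} (\<lambda>_. \<mu>)).
           (\<integral>\<^sup>+\<omega>. (\<integral>\<^sup>+x. \<phi> x \<partial>count_space {x \<in> {..<k} \<rightarrow>\<^sub>E (if \<xi> \<omega> then \<Pi>1 \<omega> else \<Pi>0 \<omega>). inj_on x {..<k}}) \<partial>P)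
           = (\<integral>\<^sup>+x. \<phi> x * ennreal (Re (Determinant.det (kernel_matrix k K x))) \<partial>PiM {..<k} (\<lambda>_. \<mu>)))"
    if k: "1 \<le> k" for k
  proof -
    let ?M = "PiM {..<k} (\<lambda>_. \<mu>)"
    define d0 where "d0 = (\<lambda>x. Determinant.det (kernel_matrix k (\<lambda>x y. K x y - 1/2 * f x * cnj (f y)) x))"
    define d1 where "d1 = (\<lambda>x. Determinant.det (kernel_matrix k (\<lambda>x y. K x y + 1/2 * f x * cnj (f y)) x))"
    note c0k = mp[OF spec[OF conjunct2[OF dpp0[unfolded dpp_def]], of k] k]
    note c1k = mp[OF spec[OF conjunct2[OF dpp1[unfolded dpp_def]], of k] k]
    have did: "d0 x + d1 x = 2 * Determinant.det (kernel_matrix k K x)" for x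
      unfolding d0_def d1_def by (rule det_kernel)
    have AE0: "AE x in ?M. d0 x \<in> \<real> \<and> 0 \<le> Re (d0 x)"
      unfolding d0_def by (rule c0k[THEN conjunct1])
    have AE1: "AE x in ?M. d1 x \<in> \<real> \<and> 0 \<le> Re (d1 x)"
      unfolding d1_def by (rule c1k[THEN conjunct1])
    have I0: "\<forall>\<phi> \<in> borel_measurable ?M.
           (\<integral>\<^sup>+\<omega>. (\<integral>\<^sup>+x. \<phi> x \<partial>count_space {x \<in> {..<k} \<rightarrow>\<^sub>E \<Pi>0 \<omega>. inj_on x {..<k}}) \<partial>P)
           = (\<integral>\<^sup>+x. \<phi> x * ennreal (Re (d0 x)) \<partial>?M)"
      unfolding d0_def by (rule c0k[THEN conjunct2])
    have I1: "\<forall>\<phi> \<in> borel_measurable ?M.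
           (\<integral>\<^sup>+\<omega>. (\<integral>\<^sup>+x. \<phi> x \<partial>count_space {x \<in> {..<k} \<rightarrow>\<^sub>E \<Pi>1 \<omega>. inj_on x {..<k}}) \<partial>P)
           = (\<integral>\<^sup>+x. \<phi> x * ennreal (Re (d1 x)) \<partial>?M)"
      unfolding d1_def by (rule c1k[THEN conjunct2])
    have fm: "f \<in> borel_measurable \<mu>" using f_L2 unfolding L2_def by (rule conjunct1)
    have Km: "(\<lambda>p. K (fst p) (snd p)) \<in> borel_measurable (\<mu> \<Otimes>\<^sub>M \<mu>)"
    proof -
      have "(\<lambda>(x,y). K x y) \<in> borel_measurable (\<mu> \<Otimes>\<^sub>M \<mu>)"
        using herm unfolding hermitian_kernel_def by (rule conjunct1)
      then show ?thesis by (simp only: split_beta')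
    qed
    have cnjm: "cnj \<in> borel_measurable borel"
      by (rule borel_measurable_continuous_onI) (rule continuous_on_cnj[OF continuous_on_id])
    have fa: "(\<lambda>p. f (fst p)) \<in> borel_measurable (\<mu> \<Otimes>\<^sub>M \<mu>)" using fm by measurable
    have "(\<lambda>p. f (snd p)) \<in> borel_measurable (\<mu> \<Otimes>\<^sub>M \<mu>)" using fm by measurable
    from measurable_comp[OF this cnjm] have fb: "(\<lambda>p. cnj (f (snd p))) \<in> borel_measurable (\<mu> \<Otimes>\<^sub>M \<mu>)"
      by (simp add: comp_def)
    have md0: "d0 \<in> borel_measurable ?M"
      unfolding d0_def by (rule det_kernel_meas) (use Km fa fb in measurable)
    have md1: "d1 \<in> borel_measurable ?M"
      unfolding d1_def by (rule det_kernel_meas) (use Km fa fb in measurable)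
    show ?thesis
    proof (intro conjI ballI)
      show "AE x in ?M. Determinant.det (kernel_matrix k K x) \<in> \<real> \<and> 0 \<le> Re (Determinant.det (kernel_matrix k K x))"
        using AE0 AE1
      proof eventually_elim
        case (elim x)
        have e: "Determinant.det (kernel_matrix k K x) = (d0 x + d1 x) / 2" using did[of x] by simp
        show ?case unfolding e using elim by (auto intro!: Reals_add Reals_divide)
      qed
    next
      fix \<phi> :: "(nat \<Rightarrow> 'a) \<Rightarrow> ennreal" assume \<phi>: "\<phi> \<in> borel_measurable ?M"
      define F where "F = (\<lambda>S. \<integral>\<^sup>+x. \<phi> x \<partial>count_space {x \<in> {..<k} \<rightarrow>\<^sub>E S. inj_on x {..<k}})"
      define F' where "F' = (\<lambda>S. if S \<in> LF then F S else 0)"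
      have F'm: "F' \<in> borel_measurable ?C"
      proof -
        have "{S \<in> space ?C. S \<in> LF} \<in> sets ?C"
          using LF_sets[OF sets_\<mu>] by (simp add: config_space_space space_borel_eq[OF sets_\<mu>])
        moreover have "F \<in> borel_measurable (restrict_space ?C {S. S \<in> LF})"
          using F_meas[OF sets_\<mu> \<phi>] by (simp add: F_def)
        moreover have "(\<lambda>_. 0::ennreal) \<in> borel_measurable (restrict_space ?C {S. S \<notin> LF})" by simp
        ultimately show ?thesis unfolding F'_def
          using measurable_If_restrict_space_iff[of ?C "\<lambda>S. S \<in> LF" F "\<lambda>_. 0" borel] by blast
      qed
      define H where "H = (\<lambda>z::bool \<times> ('a set \<times> 'a set). if fst z then F' (snd (snd z)) else F' (fst (snd z)))"
      have Hm: "H \<in> borel_measurable (count_space UNIV \<Otimes>\<^sub>M (?C \<Otimes>\<^sub>M ?C))"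
        unfolding H_def using F'm by measurable
      have Hb: "(\<lambda>y. H (b, y)) \<in> borel_measurable (?C \<Otimes>\<^sub>M ?C)" for b
      proof -
        have "(\<lambda>y. H (b, y)) = (if b then F' \<circ> snd else F' \<circ> fst)" by (auto simp: H_def fun_eq_iff)
        moreover have "F' \<circ> fst \<in> borel_measurable (?C \<Otimes>\<^sub>M ?C)" by (rule measurable_comp[OF measurable_fst F'm])
        moreover have "F' \<circ> snd \<in> borel_measurable (?C \<Otimes>\<^sub>M ?C)" by (rule measurable_comp[OF measurable_snd F'm])
        ultimately show ?thesis by simp
      qed
      have md0': "(\<lambda>x. \<phi> x * ennreal (Re (d0 x))) \<in> borel_measurable ?M" using \<phi> md0 by measurable
      have md1': "(\<lambda>x. \<phi> x * ennreal (Re (d1 x))) \<in> borel_measurable ?M" using \<phi> md1 by measurable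
      have "(\<integral>\<^sup>+\<omega>. (\<integral>\<^sup>+x. \<phi> x \<partial>count_space {x \<in> {..<k} \<rightarrow>\<^sub>E (if \<xi> \<omega> then \<Pi>1 \<omega> else \<Pi>0 \<omega>). inj_on x {..<k}}) \<partial>P)
          = (\<integral>\<^sup>+\<omega>. H (\<xi> \<omega>, ?Y \<omega>) \<partial>P)"
        by (rule nn_integral_cong) (simp add: H_def F'_def F_def lf0 lf1)
      also have "\<dots> = (\<integral>\<^sup>+z. H z \<partial>distr P (count_space UNIV \<Otimes>\<^sub>M (?C \<Otimes>\<^sub>M ?C)) (\<lambda>\<omega>. (\<xi> \<omega>, ?Y \<omega>)))"
        by (rule nn_integral_distr[symmetric]) (use \<xi>_meas \<Pi>01_meas Hm in \<open>auto intro: measurable_Pair\<close>)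
      also have "\<dots> = (\<integral>\<^sup>+z. H z \<partial>(measure_pmf (bernoulli_pmf (1/2)) \<Otimes>\<^sub>M distr P (?C \<Otimes>\<^sub>M ?C) ?Y))"
        using distrs \<xi>_bern by simp
      also have "\<dots> = (\<integral>\<^sup>+b. \<integral>\<^sup>+y. H (b, y) \<partial>distr P (?C \<Otimes>\<^sub>M ?C) ?Y \<partial>measure_pmf (bernoulli_pmf (1/2)))"
      proof -
        interpret D: prob_space "distr P (?C \<Otimes>\<^sub>M ?C) ?Y" by (rule P.prob_space_distr) (rule \<Pi>01_meas)
        have s: "sets (measure_pmf (bernoulli_pmf (1/2)) \<Otimes>\<^sub>M distr P (?C \<Otimes>\<^sub>M ?C) ?Y) = sets (count_space UNIV \<Otimes>\<^sub>M (?C \<Otimes>\<^sub>M ?C))"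
          by (rule sets_pair_measure_cong) simp_all
        have "H \<in> borel_measurable (measure_pmf (bernoulli_pmf (1/2)) \<Otimes>\<^sub>M distr P (?C \<Otimes>\<^sub>M ?C) ?Y)"
          using Hm measurable_cong_sets[OF s refl] by simp
        then show ?thesis by (rule D.nn_integral_fst[symmetric])
      qed
      also have "\<dots> = (\<integral>\<^sup>+b. (\<integral>\<^sup>+\<omega>. H (b, ?Y \<omega>) \<partial>P) \<partial>measure_pmf (bernoulli_pmf (1/2)))"
      proof (rule nn_integral_cong)
        fix b :: bool
        show "(\<integral>\<^sup>+y. H (b, y) \<partial>distr P (?C \<Otimes>\<^sub>M ?C) ?Y) = (\<integral>\<^sup>+\<omega>. H (b, ?Y \<omega>) \<partial>P)"
          by (rule nn_integral_distr[OF \<Pi>01_meas]) (use Hb in \<open>simp add: measurable_cong_sets[OF sets_distr refl]\<close>)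
      qed
      also have "\<dots> = (\<Sum>b\<in>UNIV. (\<integral>\<^sup>+\<omega>. H (b, ?Y \<omega>) \<partial>P) * ennreal (pmf (bernoulli_pmf (1/2)) b))"
        by (subst nn_integral_measure_pmf_finite) auto
      also have "\<dots> = ennreal (1/2) * (\<integral>\<^sup>+\<omega>. F (\<Pi>1 \<omega>) \<partial>P) + ennreal (1/2) * (\<integral>\<^sup>+\<omega>. F (\<Pi>0 \<omega>) \<partial>P)"
      proof -
        have a: "(\<integral>\<^sup>+\<omega>. H (True, ?Y \<omega>) \<partial>P) = (\<integral>\<^sup>+\<omega>. F (\<Pi>1 \<omega>) \<partial>P)"
          by (rule nn_integral_cong) (simp add: H_def F'_def lf1)
        have b: "(\<integral>\<^sup>+\<omega>. H (False, ?Y \<omega>) \<partial>P) = (\<integral>\<^sup>+\<omega>. F (\<Pi>0 \<omega>) \<partial>P)"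
          by (rule nn_integral_cong) (simp add: H_def F'_def lf0)
        show ?thesis by (simp add: UNIV_bool a b mult.commute add.commute)
      qed
      also have "\<dots> = ennreal (1/2) * (\<integral>\<^sup>+x. \<phi> x * ennreal (Re (d1 x)) \<partial>?M) + ennreal (1/2) * (\<integral>\<^sup>+x. \<phi> x * ennreal (Re (d0 x)) \<partial>?M)"
        using I0 I1 \<phi> by (simp add: F_def)
      also have "\<dots> = (\<integral>\<^sup>+x. ennreal (1/2) * (\<phi> x * ennreal (Re (d1 x))) + ennreal (1/2) * (\<phi> x * ennreal (Re (d0 x))) \<partial>?M)"
      proof -
        have ma: "(\<lambda>x. ennreal (1/2) * (\<phi> x * ennreal (Re (d1 x)))) \<in> borel_measurable ?M"
          using md1' by (rule borel_measurable_times_ennreal[OF borel_measurable_const])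
        have mb: "(\<lambda>x. ennreal (1/2) * (\<phi> x * ennreal (Re (d0 x)))) \<in> borel_measurable ?M"
          using md0' by (rule borel_measurable_times_ennreal[OF borel_measurable_const])
        show ?thesis unfolding nn_integral_add[OF ma mb] nn_integral_cmult[OF md0'] nn_integral_cmult[OF md1'] ..
      qed
      also have "\<dots> = (\<integral>\<^sup>+x. \<phi> x * ennreal (Re (Determinant.det (kernel_matrix k K x))) \<partial>?M)"
      proof (rule nn_integral_cong_AE)
        show "AE x in ?M. ennreal (1/2) * (\<phi> x * ennreal (Re (d1 x))) + ennreal (1/2) * (\<phi> x * ennreal (Re (d0 x)))
            = \<phi> x * ennreal (Re (Determinant.det (kernel_matrix k K x)))"
          using AE0 AE1
        proof eventually_elim
          case (elim x)
          have "Re (Determinant.det (kernel_matrix k K x)) = 1/2 * Re (d1 x) + 1/2 * Re (d0 x)"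
            using arg_cong[OF did[of x], of Re] by simp
          note r = this
          have n0: "0 \<le> Re (d0 x)" and n1: "0 \<le> Re (d1 x)" using elim by auto
          have "ennreal (Re (Determinant.det (kernel_matrix k K x))) = ennreal (1/2 * Re (d1 x)) + ennreal (1/2 * Re (d0 x))"
            unfolding r by (rule ennreal_plus) (use n0 n1 in auto)
          also have "\<dots> = ennreal (1/2) * ennreal (Re (d1 x)) + ennreal (1/2) * ennreal (Re (d0 x))"
          proof (rule arg_cong2[where f="(+)"])
            show "ennreal (1/2 * Re (d1 x)) = ennreal (1/2) * ennreal (Re (d1 x))"
              by (rule ennreal_mult) (use n1 in auto)
            show "ennreal (1/2 * Re (d0 x)) = ennreal (1/2) * ennreal (Re (d0 x))"
              by (rule ennreal_mult) (use n0 in auto)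
          qed
          finally have eq: "ennreal (Re (Determinant.det (kernel_matrix k K x))) = ennreal (1/2) * ennreal (Re (d1 x)) + ennreal (1/2) * ennreal (Re (d0 x))" .
          show ?case unfolding eq by (simp add: distrib_left mult.left_commute)
        qed
      qed
      finally show "(\<integral>\<^sup>+\<omega>. (\<integral>\<^sup>+x. \<phi> x \<partial>count_space {x \<in> {..<k} \<rightarrow>\<^sub>E (if \<xi> \<omega> then \<Pi>1 \<omega> else \<Pi>0 \<omega>). inj_on x {..<k}}) \<partial>P)
           = (\<integral>\<^sup>+x. \<phi> x * ennreal (Re (Determinant.det (kernel_matrix k K x))) \<partial>?M)" .
    qed
  qed
  show ?thesis unfolding dpp_def using pp main by blast
qed

end
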